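(* Let $a,b\in\alpha$ with $a\neq\tau(a)$ and $b\neq\tau(b)$, and let $m,n\ge3$. The monoliteral words $a^m=aa\cdots a$ ($m$ letters) and $b^n$ in the alphabet $\alpha$ are homotopic if and only if $a=b$ and $m=n$.
   Context: Fix a set $\alpha$ with an involution $\tau:\alpha\to\alpha$. An $\alpha$-alphabet is a set $\mathcal A$ with a map $\mathcal A\to\alpha$, $A\mapsto|A|$. An étale word over $\alpha$ is a pair $(\mathcal A,w)$ with $\mathcal A$ an $\alpha$-alphabet and $w$ a finite word in letters of $\mathcal A$. A nanoword is an étale word with $\mathcal A$ finite and every letter occurring exactly twice. Isomorphism of nanowords: a bijection of alphabets preserving $|\cdot|$ carrying one word to the other letterwise. Homotopy moves on nanowords ($x,y,z,t$ words in the remaining letters): (1) $(\mathcal A,xAAy)\mapsto(\mathcal A\setminus\{A\},xy)$; (2) $(\mathcal A,xAByBAz)\mapsto(\mathcal A\setminus\{A,B\},xyz)$ if $|B|=\tau(|A|)$; (3) $(\mathcal A,xAByACzBCt)\mapsto(\mathcal A,xBAyCAzCBt)$ if $A,B,C$ distinct with $|A|=|B|=|C|$. Homotopy of nanowords is the equivalence relation generated by isomorphisms, these moves and inverses. Desingularization: for an étale word $(\mathcal A,w)$ with $m_w(A)$ the number of occurrences of $A$, let $\mathcal A^d=\{A_{i,j}:1\le i<j\le m_w(A)\}$ with $|A_{i,j}|=|A|$, and $w^d$ obtained from $w$ by deleting letters of multiplicity 1 and replacing the $i$-th occurrence of $A$ (with $m=m_w(A)\ge2$) by $A_{1,i}\cdots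 A_{i-1,i}A_{i,i+1}\cdots A_{i,m}$. Two étale words are homotopic if their desingularizations are homotopic nanowords. A word in the alphabet $\alpha$ is regarded as the étale word $(\alpha,w)$ with identity projection. *)

theory Defs
  imports Main
begin

text \<open>A nanoword over alpha is represented by a pair (w, p) of a word w over a letter
type 'l and a projection p :: 'l => 'a; its alphabet is set w (every letter of the
alphabet occurs in w, exactly twice).  Only p restricted to set w matters.\<close>

definition nanoword :: "'l list \<Rightarrow> bool" where
  "nanoword w \<longleftrightarrow> (\<forall>x\<in>set w. count_list w x = 2)"

inductive hmove :: "('a \<Rightarrow> 'a) \<Rightarrow> ('l list \<times> ('l \<Rightarrow> 'a)) \<Rightarrow> ('l list \<times> ('l \<Rightarrow> 'a)) \<Rightarrow> bool"
  for \<tau> :: "'a \<Rightarrow> 'a" where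
  iso: "\<lbrakk>nanoword w; inj_on f (set w); \<forall>x\<in>set w. q (f x) = p x\<rbrakk>
        \<Longrightarrow> hmove \<tau> (w, p) (map f w, q)"
| move1: "nanoword (x @ [A, A] @ y) \<Longrightarrow> hmove \<tau> (x @ [A, A] @ y, p) (x @ y, p)"
| move2: "\<lbrakk>nanoword (x @ [A, B] @ y @ [B, A] @ z); p B = \<tau> (p A)\<rbrakk>
        \<Longrightarrow> hmove \<tau> (x @ [A, B] @ y @ [B, A] @ z, p) (x @ y @ z, p)"
| move3: "\<lbrakk>nanoword (x @ [A, B] @ y @ [A, C] @ z @ [B, C] @ t); distinct [A, B, C];
          p A = p B; p B = p C\<rbrakk>
        \<Longrightarrow> hmove \<tau> (x @ [A, B] @ y @ [A, C] @ z @ [B, C] @ t, p)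
                     (x @ [B, A] @ y @ [C, A] @ z @ [C, B] @ t, p)"

definition nano_homotopic ::
  "('a \<Rightarrow> 'a) \<Rightarrow> ('l list \<times> ('l \<Rightarrow> 'a)) \<Rightarrow> ('l list \<times> ('l \<Rightarrow> 'a)) \<Rightarrow> bool" where
  "nano_homotopic \<tau> = (\<lambda>u v. hmove \<tau> u v \<or> hmove \<tau> v u)\<^sup>*\<^sup>*"

text \<open>Desingularization: the i-th occurrence (1-based) of a letter A of multiplicity m
is replaced by A_{1,i} ... A_{i-1,i} A_{i,i+1} ... A_{i,m}; letter A_{i,j} is (A,i,j).
Letters of multiplicity 1 give the empty block, i.e. are deleted.\<close>

definition desing :: "'l list \<Rightarrow> ('l \<times> nat \<times> nat) list" where
  "desing w = concat (map (\<lambda>k.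
      let A = w ! k; i = count_list (take (Suc k) w) A; m = count_list w A
      in map (\<lambda>j. (A, j, i)) [1..<i] @ map (\<lambda>j. (A, i, j)) [Suc i..<Suc m])
    [0..<length w])"

definition etale_homotopic ::
  "('a \<Rightarrow> 'a) \<Rightarrow> ('l list \<times> ('l \<Rightarrow> 'a)) \<Rightarrow> ('l list \<times> ('l \<Rightarrow> 'a)) \<Rightarrow> bool" where
  "etale_homotopic \<tau> u v \<longleftrightarrow>
     nano_homotopic \<tau> (desing (fst u), snd u \<circ> fst) (desing (fst v), snd v \<circ> fst)"

end

theory Submission
  imports Defs "HOL-Library.Product_Lexorder"
begin


definition eps :: "'l list \<Rightarrow> 'l \<Rightarrow> 'l \<Rightarrow> int" where
  "eps w A B = (if A = B then 0 else
     (let f = filter (\<lambda>v. v = A \<or> v = B) w in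
      if f = [A,B,A,B] then 1 else if f = [B,A,B,A] then -1 else 0))"

definition chi :: "('a \<Rightarrow> 'a) \<Rightarrow> 'a \<Rightarrow> 'a \<Rightarrow> int" where
  "chi \<tau> a x = (if x = a then 1 else if x = \<tau> a then -1 else 0)"

definition cval :: "('a \<Rightarrow> 'a) \<Rightarrow> 'a \<Rightarrow> 'l list \<Rightarrow> ('l \<Rightarrow> 'a) \<Rightarrow> 'l \<Rightarrow> int" where
  "cval \<tau> a w p A = (\<Sum>B\<in>set w. eps w A B * chi \<tau> a (p B))"

definition JJ :: "('a \<Rightarrow> 'a) \<Rightarrow> 'a \<Rightarrow> ('l list \<times> ('l \<Rightarrow> 'a)) \<Rightarrow> int" where
  "JJ \<tau> a u = (\<Sum>A\<in>set (fst u). if cval \<tau> a (fst u) (snd u) A = 0 then 0 else chi \<tau> a (snd u A))"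

lemma eps_anti: "eps w B A = - eps w A B"
proof -
  have "(\<lambda>v. v = B \<or> v = A) = (\<lambda>v. v = A \<or> v = B)" by auto
  then show ?thesis by (auto simp: eps_def Let_def)
qed

lemma filter_eq_rep: "filter (\<lambda>v. v = E) xs = replicate (count_list xs E) E"
  by (induction xs) auto

lemma rep_pat1: "A \<noteq> E \<Longrightarrow> (replicate i E @ A # replicate j E @ A # replicate k E = [A,E,A,E])
   \<longleftrightarrow> (i = 0 \<and> j = 1 \<and> k = 1)"
  apply (cases i; cases j; cases k; simp)
  apply (auto simp: Cons_eq_append_conv append_eq_Cons_conv)
  done

lemma rep_pat2: "A \<noteq> E \<Longrightarrow> (replicate i E @ A # replicate j E @ A # replicate k E = [E,A,E,A])
   \<longleftrightarrow> (i = 1 \<and> j = 1 \<and> k = 0)"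
  apply (cases i; cases j; cases k; simp)
  apply (auto simp: Cons_eq_append_conv append_eq_Cons_conv)
  done

definition epsF :: "nat \<Rightarrow> nat \<Rightarrow> nat \<Rightarrow> int" where
  "epsF i j k = (if i = 0 \<and> j = 1 \<and> k = 1 then 1 else if i = 1 \<and> j = 1 \<and> k = 0 then -1 else 0)"

lemma filter_notin: "\<forall>v\<in>set xs. \<not> P v \<Longrightarrow> filter P xs = []"
  by (induction xs) auto

lemma filter_AE: "A \<notin> set xs \<Longrightarrow> filter (\<lambda>v. v = A \<or> v = E) xs = replicate (count_list xs E) E"
  by (induction xs) auto

lemma eps_split:
  assumes "A \<notin> set x" "A \<notin> set y" "A \<notin> set z" "E \<noteq> A"
  shows "eps (x @ A # y @ A # z) A E = epsF (count_list x E) (count_list y E) (count_list z E)"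
proof -
  have "filter (\<lambda>v. v = A \<or> v = E) (x @ A # y @ A # z) =
    replicate (count_list x E) E @ A # replicate (count_list y E) E @ A # replicate (count_list z E) E"
    using assms by (simp add: filter_AE)
  then show ?thesis using assms rep_pat1[of A E] rep_pat2[of A E] by (simp add: eps_def epsF_def Let_def)
qed

lemma eps_other:
  assumes "\<forall>v. P v \<longleftrightarrow> (v = D \<or> v = E)"
    and "filter P w = filter P w'"
  shows "eps w D E = eps w' D E"
proof -
  have "P = (\<lambda>v. v = D \<or> v = E)" using assms(1) by auto
  then show ?thesis using assms(2) by (simp add: eps_def)
qed


lemma nano_cnt: "nanoword w \<Longrightarrow> A \<in> set w \<Longrightarrow> count_list w A = 2"
  by (simp add: nanoword_def)

lemma chi_tau: "\<forall>x. \<tau> (\<tau> x) = x \<Longrightarrow> a \<noteq> \<tau> a \<Longrightarrow> chi \<tau> a (\<tau> x) = - chi \<tau> a x"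
  unfolding chi_def by (cases "x = a"; cases "x = \<tau> a"; auto; metis)

lemma move1_inv:
  assumes "nanoword (x @ [A, A] @ y)"
  shows "JJ \<tau> a (x @ [A, A] @ y, p) = JJ \<tau> a (x @ y, p)"
proof -
  let ?w = "x @ [A, A] @ y"
  have c: "count_list ?w A = 2" using nano_cnt[OF assms, of A] by simp
  hence nx: "A \<notin> set x" and ny: "A \<notin> set y" by (auto simp: count_list_0_iff[symmetric])
  let ?S = "set (x @ y)"
  have AS: "A \<notin> ?S" using nx ny by simp
  have setw: "set ?w = insert A ?S" by auto
  have e0: "eps ?w A E = 0" for E
  proof (cases "E = A")
    case True then show ?thesis by (simp add: eps_def)
  next
    case False
    have "eps (x @ A # [] @ A # y) A E = 0" using eps_split[of A x "[]" y E] nx ny False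
      by (simp add: epsF_def)
    then show ?thesis by simp
  qed
  have e1: "eps ?w D E = eps (x @ y) D E" if "D \<noteq> A" "E \<noteq> A" for D E
    by (rule eps_other[of "\<lambda>v. v = D \<or> v = E"]) (use that in auto)
  have cv: "cval \<tau> a ?w p D = cval \<tau> a (x @ y) p D" if "D \<in> ?S" for D
  proof -
    have "cval \<tau> a ?w p D = eps ?w D A * chi \<tau> a (p A) + (\<Sum>B\<in>?S. eps ?w D B * chi \<tau> a (p B))"
      unfolding cval_def setw using AS by (simp add: sum.insert)
    also have "\<dots> = (\<Sum>B\<in>?S. eps (x @ y) D B * chi \<tau> a (p B))"
    proof -
      have DA: "D \<noteq> A" using that AS by auto
      have "eps ?w D A = 0" using e0[of D] eps_anti[of ?w D A] by simp
      moreover have "eps ?w D B = eps (x @ y) D B" if "B \<in> ?S" for B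
        using e1[OF DA] that AS by metis
      ultimately show ?thesis by (metis (no_types, lifting) add_0 mult_zero_left sum.cong)
    qed
    finally show ?thesis by (simp add: cval_def)
  qed
  have cA: "cval \<tau> a ?w p A = 0" using e0 by (simp add: cval_def)
  show ?thesis
  proof -
    have "JJ \<tau> a (?w, p) = (if cval \<tau> a ?w p A = 0 then 0 else chi \<tau> a (p A)) +
       (\<Sum>D\<in>?S. if cval \<tau> a ?w p D = 0 then 0 else chi \<tau> a (p D))"
      unfolding JJ_def fst_conv snd_conv setw using AS by (simp add: sum.insert)
    also have "\<dots> = JJ \<tau> a (x @ y, p)"
      unfolding JJ_def fst_conv snd_conv using cA cv by simp
    finally show ?thesis .
  qed
qed


lemma move2_inv:
  assumes inv: "\<forall>x. \<tau> (\<tau> x) = x" and ana: "a \<noteq> \<tau> a"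
    and nw: "nanoword (x @ [A, B] @ y @ [B, A] @ z)" and pB: "p B = \<tau> (p A)"
  shows "JJ \<tau> a (x @ [A, B] @ y @ [B, A] @ z, p) = JJ \<tau> a (x @ y @ z, p)"
proof -
  let ?w = "x @ [A, B] @ y @ [B, A] @ z"
  have cA: "count_list ?w A = 2" using nano_cnt[OF nw, of A] by simp
  have cB: "count_list ?w B = 2" using nano_cnt[OF nw, of B] by simp
  have AB: "A \<noteq> B" using cA by auto
  have nA: "A \<notin> set x" "A \<notin> set y" "A \<notin> set z" using cA AB by (auto simp: count_list_0_iff[symmetric])
  have nB: "B \<notin> set x" "B \<notin> set y" "B \<notin> set z" using cB AB by (auto simp: count_list_0_iff[symmetric])
  let ?S = "set (x @ y @ z)"
  have AS: "A \<notin> ?S" "B \<notin> ?S" using nA nB by auto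
  have setw: "set ?w = insert A (insert B ?S)" by auto
  have eAB: "eps ?w A B = 0"
  proof -
    have "filter (\<lambda>v. v = A \<or> v = B) l = []" if "A \<notin> set l" "B \<notin> set l" for l
      using that by (intro filter_notin) auto
    then show ?thesis using AB nA nB by (simp add: eps_def)
  qed
  have eBA: "eps ?w B A = 0" using eAB eps_anti[of ?w B A] by simp
  have eAE: "eps ?w A E = eps ?w B E" if "E \<noteq> A" "E \<noteq> B" for E
  proof -
    have "eps (x @ A # (B # y @ [B]) @ A # z) A E = epsF (count_list x E) (count_list y E) (count_list z E)"
      using eps_split[of A x "B # y @ [B]" z E] nA AB that by simp
    moreover have "eps ((x @ [A]) @ B # y @ B # (A # z)) B E = epsF (count_list x E) (count_list y E) (count_list z E)"
      using eps_split[of B "x @ [A]" y "A # z" E] nB AB that by simp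
    ultimately show ?thesis by simp
  qed
  have e1: "eps ?w D E = eps (x @ y @ z) D E" if "D \<notin> {A, B}" "E \<notin> {A, B}" for D E
    by (rule eps_other[of "\<lambda>v. v = D \<or> v = E"]) (use that in auto)
  define f where "f = (\<lambda>E. eps ?w A E * chi \<tau> a (p E))"
  have cvA: "cval \<tau> a ?w p A = (\<Sum>E\<in>?S. f E)"
    unfolding cval_def setw f_def using AS AB eAB by (simp add: sum.insert eps_def)
  have cvB: "cval \<tau> a ?w p B = (\<Sum>E\<in>?S. f E)"
  proof -
    have "cval \<tau> a ?w p B = (\<Sum>E\<in>?S. eps ?w B E * chi \<tau> a (p E))"
      unfolding cval_def setw using AS AB eBA by (simp add: sum.insert eps_def)
    also have "\<dots> = (\<Sum>E\<in>?S. f E)" unfolding f_def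
      by (rule sum.cong[OF refl]) (metis eAE AS)
    finally show ?thesis .
  qed
  have chiB: "chi \<tau> a (p B) = - chi \<tau> a (p A)" using chi_tau[OF inv ana] pB by simp
  have cv: "cval \<tau> a ?w p D = cval \<tau> a (x @ y @ z) p D" if "D \<in> ?S" for D
  proof -
    have DA: "D \<noteq> A" "D \<noteq> B" using that AS by auto
    have "cval \<tau> a ?w p D = eps ?w D A * chi \<tau> a (p A) + eps ?w D B * chi \<tau> a (p B)
        + (\<Sum>E\<in>?S. eps ?w D E * chi \<tau> a (p E))"
      unfolding cval_def setw using AS AB by (simp add: sum.insert)
    also have "eps ?w D A * chi \<tau> a (p A) + eps ?w D B * chi \<tau> a (p B) = 0"
      using eAE[of D] DA eps_anti[of ?w D A] eps_anti[of ?w D B] chiB by simp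
    also have "(\<Sum>E\<in>?S. eps ?w D E * chi \<tau> a (p E)) = cval \<tau> a (x @ y @ z) p D"
      unfolding cval_def by (rule sum.cong[OF refl]) (metis e1 DA AS insertE singletonD)
    finally show ?thesis by simp
  qed
  define g where "g = (\<lambda>D. if cval \<tau> a ?w p D = 0 then 0 else chi \<tau> a (p D))"
  have "JJ \<tau> a (?w, p) = g A + g B + (\<Sum>D\<in>?S. g D)"
    unfolding JJ_def fst_conv snd_conv setw g_def using AS AB by (simp add: sum.insert)
  also have "g A + g B = 0" unfolding g_def using cvA cvB chiB by simp
  also have "(\<Sum>D\<in>?S. g D) = JJ \<tau> a (x @ y @ z, p)"
    unfolding JJ_def g_def fst_conv snd_conv by (rule sum.cong[OF refl]) (metis cv)
  finally show ?thesis by simp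
qed


lemma sum3:
  assumes "finite S" "A \<in> S" "B \<in> S" "C \<in> S" "distinct [A, B, C]"
  shows "sum f S = f A + f B + f C + sum f (S - {A, B, C})"
proof -
  have "S = insert A (insert B (insert C (S - {A, B, C})))" using assms by auto
  then have "sum f S = sum f (insert A (insert B (insert C (S - {A, B, C}))))" by simp
  also have "\<dots> = f A + f B + f C + sum f (S - {A, B, C})"
    using assms by (simp add: sum.insert add.assoc)
  finally show ?thesis .
qed

lemma eps_split':
  assumes "w = x @ A # y @ A # z" "A \<notin> set x" "A \<notin> set y" "A \<notin> set z" "E \<noteq> A"
  shows "eps w A E = epsF (count_list x E) (count_list y E) (count_list z E)"
  using eps_split[OF assms(2-5)] assms(1) by simp

lemma move3_inv:
  assumes nw: "nanoword (x @ [A, B] @ y @ [A, C] @ z @ [B, C] @ t)" and ds: "distinct [A, B, C]"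
    and pAB: "p A = p B" and pBC: "p B = p C"
  shows "JJ \<tau> a (x @ [A, B] @ y @ [A, C] @ z @ [B, C] @ t, p) =
         JJ \<tau> a (x @ [B, A] @ y @ [C, A] @ z @ [C, B] @ t, p)"
proof -
  let ?w = "x @ [A, B] @ y @ [A, C] @ z @ [B, C] @ t"
  let ?v = "x @ [B, A] @ y @ [C, A] @ z @ [C, B] @ t"
  have cA: "count_list ?w A = 2" using nano_cnt[OF nw, of A] by simp
  have cB: "count_list ?w B = 2" using nano_cnt[OF nw, of B] by simp
  have cC: "count_list ?w C = 2" using nano_cnt[OF nw, of C] by simp
  have nA: "A \<notin> set x" "A \<notin> set y" "A \<notin> set z" "A \<notin> set t" using cA ds by (auto simp: count_list_0_iff[symmetric])
  have nB: "B \<notin> set x" "B \<notin> set y" "B \<notin> set z" "B \<notin> set t" using cB ds by (auto simp: count_list_0_iff[symmetric])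
  have nC: "C \<notin> set x" "C \<notin> set y" "C \<notin> set z" "C \<notin> set t" using cC ds by (auto simp: count_list_0_iff[symmetric])
  have setv: "set ?v = set ?w" by auto
  have fn: "filter (\<lambda>v. v = X \<or> v = Y) l = []" if "X \<notin> set l" "Y \<notin> set l" for X Y l
    using that by (intro filter_notin) auto
  have dd: "A \<noteq> B" "A \<noteq> C" "B \<noteq> C" "B \<noteq> A" "C \<noteq> A" "C \<noteq> B" using ds by auto
  have pw: "eps ?w A B = 1" "eps ?w A C = 0" "eps ?w B C = 1"
    using dd nA nB nC by (simp_all add: eps_def fn)
  have pv: "eps ?v A B = 0" "eps ?v A C = 1" "eps ?v B C = 0"
    using dd nA nB nC by (simp_all add: eps_def fn)
  have sA: "eps ?w A E = eps ?v A E" if "E \<notin> {A, B, C}" for E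
  proof -
    have "eps ?w A E = epsF (count_list x E) (count_list (B # y) E) (count_list (C # z @ [B, C] @ t) E)"
      by (rule eps_split'[of _ x A "B # y" "C # z @ [B, C] @ t"]) (use nA nB nC that dd in auto)
    moreover have "eps ?v A E = epsF (count_list (x @ [B]) E) (count_list (y @ [C]) E) (count_list (z @ [C, B] @ t) E)"
      by (rule eps_split'[of _ "x @ [B]" A "y @ [C]" "z @ [C, B] @ t"]) (use nA nB nC that dd in auto)
    moreover have "A \<noteq> E" "B \<noteq> E" "C \<noteq> E" using that by auto
    ultimately show ?thesis by simp
  qed
  have sB: "eps ?w B E = eps ?v B E" if "E \<notin> {A, B, C}" for E
  proof -
    have "eps ?w B E = epsF (count_list (x @ [A]) E) (count_list (y @ [A, C] @ z) E) (count_list (C # t) E)"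
      by (rule eps_split'[of _ "x @ [A]" B "y @ [A, C] @ z" "C # t"]) (use nA nB nC that dd in auto)
    moreover have "eps ?v B E = epsF (count_list x E) (count_list (A # y @ [C, A] @ z @ [C]) E) (count_list t E)"
      by (rule eps_split'[of _ x B "A # y @ [C, A] @ z @ [C]" t]) (use nA nB nC that dd in auto)
    moreover have "A \<noteq> E" "B \<noteq> E" "C \<noteq> E" using that by auto
    ultimately show ?thesis by simp
  qed
  have sC: "eps ?w C E = eps ?v C E" if "E \<notin> {A, B, C}" for E
  proof -
    have "eps ?w C E = epsF (count_list (x @ [A, B] @ y @ [A]) E) (count_list (z @ [B]) E) (count_list t E)"
      by (rule eps_split'[of _ "x @ [A, B] @ y @ [A]" C "z @ [B]" t]) (use nA nB nC that dd in auto)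
    moreover have "eps ?v C E = epsF (count_list (x @ [B, A] @ y) E) (count_list (A # z) E) (count_list (B # t) E)"
      by (rule eps_split'[of _ "x @ [B, A] @ y" C "A # z" "B # t"]) (use nA nB nC that dd in auto)
    moreover have "A \<noteq> E" "B \<noteq> E" "C \<noteq> E" using that by auto
    ultimately show ?thesis by simp
  qed
  have sO: "eps ?w D E = eps ?v D E" if "D \<notin> {A, B, C}" "E \<notin> {A, B, C}" for D E
    by (rule eps_other[of "\<lambda>v. v = D \<or> v = E"]) (use that in auto)
  have eqDE: "eps ?w D E = eps ?v D E" if "\<not> (D \<in> {A, B, C} \<and> E \<in> {A, B, C})" for D E
  proof (cases "D \<in> {A, B, C}")
    case True
    then have "E \<notin> {A, B, C}" using that by blast
    then show ?thesis using True sA sB sC by blast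
  next
    case False
    show ?thesis
    proof (cases "E \<in> {A, B, C}")
      case True
      then have "eps ?w E D = eps ?v E D" using False sA sB sC by blast
      then show ?thesis using eps_anti[of ?w D E] eps_anti[of ?v D E] by simp
    next
      case F2: False
      then show ?thesis using sO False by blast
    qed
  qed
  let ?S = "set ?w"
  have inS: "A \<in> ?S" "B \<in> ?S" "C \<in> ?S" by auto
  have rest: "(\<Sum>E\<in>?S - {A, B, C}. eps ?w D E * chi \<tau> a (p E)) = (\<Sum>E\<in>?S - {A, B, C}. eps ?v D E * chi \<tau> a (p E))" for D
    by (rule sum.cong[OF refl]) (metis DiffD2 eqDE)
  have cv: "cval \<tau> a ?w p D = cval \<tau> a ?v p D" if "D \<in> ?S" for D
  proof (cases "D \<in> {A, B, C}")
    case False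
    then show ?thesis unfolding cval_def setv
      by (intro sum.cong[OF refl]) (metis eqDE)
  next
    case True
    have ew: "cval \<tau> a ?w p D = eps ?w D A * chi \<tau> a (p A) + eps ?w D B * chi \<tau> a (p B) + eps ?w D C * chi \<tau> a (p C)
       + (\<Sum>E\<in>?S - {A, B, C}. eps ?w D E * chi \<tau> a (p E))"
      unfolding cval_def by (rule sum3[OF _ inS ds]) simp
    have ev: "cval \<tau> a ?v p D = eps ?v D A * chi \<tau> a (p A) + eps ?v D B * chi \<tau> a (p B) + eps ?v D C * chi \<tau> a (p C)
       + (\<Sum>E\<in>?S - {A, B, C}. eps ?v D E * chi \<tau> a (p E))"
      unfolding cval_def setv by (rule sum3[OF _ inS ds]) simp
    have e0: "eps l X X = 0" for l X by (simp add: eps_def)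
    have aw: "eps ?w B A = -1" "eps ?w C A = 0" "eps ?w C B = -1"
      using pw eps_anti[of ?w B A] eps_anti[of ?w C A] eps_anti[of ?w C B] by simp_all
    have av: "eps ?v B A = 0" "eps ?v C A = -1" "eps ?v C B = 0"
      using pv eps_anti[of ?v B A] eps_anti[of ?v C A] eps_anti[of ?v C B] by simp_all
    have "eps ?w D A + eps ?w D B + eps ?w D C = eps ?v D A + eps ?v D B + eps ?v D C"
    proof -
      from True consider "D = A" | "D = B" | "D = C" by blast
      then show ?thesis
      proof cases
        case 1 then show ?thesis using pw pv e0[of ?w A] e0[of ?v A] by simp
      next
        case 2 then show ?thesis using pw pv aw av e0[of ?w B] e0[of ?v B] by simp
      next
        case 3 then show ?thesis using aw av e0[of ?w C] e0[of ?v C] by simp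
      qed
    qed
    moreover have kB: "chi \<tau> a (p B) = chi \<tau> a (p A)" and kC: "chi \<tau> a (p C) = chi \<tau> a (p A)"
      using pAB pBC by simp_all
    moreover have "eps l D A * chi \<tau> a (p A) + eps l D B * chi \<tau> a (p B) + eps l D C * chi \<tau> a (p C)
      = (eps l D A + eps l D B + eps l D C) * chi \<tau> a (p A)" for l
      unfolding kB kC by (simp add: distrib_right)
    ultimately have "eps ?w D A * chi \<tau> a (p A) + eps ?w D B * chi \<tau> a (p B) + eps ?w D C * chi \<tau> a (p C)
      = eps ?v D A * chi \<tau> a (p A) + eps ?v D B * chi \<tau> a (p B) + eps ?v D C * chi \<tau> a (p C)"
      by presburger
    then show ?thesis using ew ev rest[of D] by simp
  qed
  show ?thesis unfolding JJ_def fst_conv snd_conv setv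
    by (rule sum.cong[OF refl]) (metis cv)
qed


lemma eps_map:
  assumes inj: "inj_on f (set w)" and D: "D \<in> set w" and E: "E \<in> set w"
  shows "eps (map f w) (f D) (f E) = eps w D E"
proof (cases "D = E")
  case True then show ?thesis by (simp add: eps_def)
next
  case False
  have fDE: "f D \<noteq> f E" using False inj D E by (auto dest: inj_onD)
  let ?L = "filter (\<lambda>v. v = D \<or> v = E) w"
  have "filter (\<lambda>v. v = f D \<or> v = f E) (map f w) = map f (filter (\<lambda>v. f v = f D \<or> f v = f E) w)"
    by (simp add: filter_map comp_def)
  also have "filter (\<lambda>v. f v = f D \<or> f v = f E) w = ?L"
    by (rule filter_cong[OF refl]) (use inj D E in \<open>auto dest: inj_onD\<close>)
  finally have fl: "filter (\<lambda>v. v = f D \<or> v = f E) (map f w) = map f ?L" .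
  have sub: "set ?L \<union> set [D, E, D, E] \<subseteq> set w" "set ?L \<union> set [E, D, E, D] \<subseteq> set w" using D E by auto
  have i1: "map f ?L = [f D, f E, f D, f E] \<longleftrightarrow> ?L = [D, E, D, E]"
    using inj_on_map_eq_map[OF inj_on_subset[OF inj sub(1)]] by simp
  have i2: "map f ?L = [f E, f D, f E, f D] \<longleftrightarrow> ?L = [E, D, E, D]"
    using inj_on_map_eq_map[OF inj_on_subset[OF inj sub(2)]] by simp
  show ?thesis using False fDE fl i1 i2 by (simp add: eps_def Let_def)
qed

lemma iso_inv:
  assumes inj: "inj_on f (set w)" and q: "\<forall>x\<in>set w. q (f x) = p x"
  shows "JJ \<tau> a (map f w, q) = JJ \<tau> a (w, p)"
proof -
  have cv: "cval \<tau> a (map f w) q (f D) = cval \<tau> a w p D" if D: "D \<in> set w" for D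
  proof -
    have "cval \<tau> a (map f w) q (f D) = (\<Sum>E\<in>set w. eps (map f w) (f D) (f E) * chi \<tau> a (q (f E)))"
      unfolding cval_def set_map by (simp add: sum.reindex[OF inj])
    also have "\<dots> = cval \<tau> a w p D" unfolding cval_def
      by (rule sum.cong[OF refl]) (simp add: eps_map[OF inj D] q)
    finally show ?thesis .
  qed
  show ?thesis
    unfolding JJ_def fst_conv snd_conv set_map
    by (simp add: sum.reindex[OF inj] cv) (rule sum.cong[OF refl], simp add: q)
qed

lemma hmove_inv:
  assumes inv: "\<forall>x. \<tau> (\<tau> x) = x" and ana: "a \<noteq> \<tau> a"
    and "hmove \<tau> u v"
  shows "JJ \<tau> a u = JJ \<tau> a v"
  using assms(3)
proof cases
  case (iso w f q p) then show ?thesis using iso_inv[of f w q p] by simp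
next
  case (move1 x A y p) then show ?thesis using move1_inv[of x A y] by simp
next
  case (move2 x A B y z p) then show ?thesis using move2_inv[OF inv ana, of x A B y z p] by simp
next
  case (move3 x A B y C z t p) then show ?thesis using move3_inv[of x A B y C z t p] by simp
qed

lemma homotopic_inv:
  assumes inv: "\<forall>x. \<tau> (\<tau> x) = x" and ana: "a \<noteq> \<tau> a"
    and "nano_homotopic \<tau> u v"
  shows "JJ \<tau> a u = JJ \<tau> a v"
  using assms(3) unfolding nano_homotopic_def
proof induction
  case base then show ?case by simp
next
  case (step y z) then show ?case using hmove_inv[OF inv ana, of y z] hmove_inv[OF inv ana, of z y] by auto
qed



definition KK :: "nat \<Rightarrow> (nat \<times> nat) list" where
  "KK m = concat (map (\<lambda>t. map (Pair t) ([1..<t] @ [Suc t..<Suc m])) [1..<Suc m])"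

definition GG :: "'c \<Rightarrow> nat \<times> nat \<Rightarrow> 'c \<times> nat \<times> nat" where
  "GG c u = (c, min (fst u) (snd u), max (fst u) (snd u))"

lemma sorted_blocks:
  fixes ts :: "nat list" and S :: "nat \<Rightarrow> nat list"
  assumes "sorted_wrt (<) ts" "\<And>t. sorted_wrt (<) (S t)"
  shows "sorted_wrt (<) (concat (map (\<lambda>t. map (Pair t) (S t)) ts))"
  using assms(1)
proof (induction ts)
  case Nil then show ?case by simp
next
  case (Cons t ts)
  have "sorted_wrt (<) (map (Pair t) (S t))"
  proof -
    have "(\<lambda>x y. (t, x) < (t, y)) = (\<lambda>x y. x < y)" by (auto simp: fun_eq_iff)
    then show ?thesis using assms(2)[of t] by (simp add: sorted_wrt_map)
  qed
  then show ?case using Cons by (auto simp: sorted_wrt_append)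
qed

lemma KK_sorted: "sorted_wrt (<) (KK m)"
  unfolding KK_def
  by (rule sorted_blocks) (auto simp: sorted_wrt_append)

lemma set_KK: "set (KK m) = {(t, s). 1 \<le> t \<and> t \<le> m \<and> 1 \<le> s \<and> s \<le> m \<and> t \<noteq> s}"
proof
  show "set (KK m) \<subseteq> {(t, s). 1 \<le> t \<and> t \<le> m \<and> 1 \<le> s \<and> s \<le> m \<and> t \<noteq> s}" unfolding KK_def by auto
next
  show "{(t, s). 1 \<le> t \<and> t \<le> m \<and> 1 \<le> s \<and> s \<le> m \<and> t \<noteq> s} \<subseteq> set (KK m)"
  proof clarify
    fix t s assume h: "1 \<le> t" "t \<le> m" "1 \<le> s" "s \<le> m" "t \<noteq> s"
    have "s \<in> set ([1..<t] @ [Suc t..<Suc m])" using h by auto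
    then have "(t, s) \<in> set (map (Pair t) ([1..<t] @ [Suc t..<Suc m]))" unfolding set_map by (rule imageI)
    moreover have "t \<in> set [1..<Suc m]" using h by auto
    ultimately show "(t, s) \<in> set (KK m)" unfolding KK_def set_concat
      apply (intro UN_I[where a = "map (Pair t) ([1..<t] @ [Suc t..<Suc m])"])
       apply (subst set_map)
       apply (rule imageI[where f = "\<lambda>t. map (Pair t) ([1..<t] @ [Suc t..<Suc m])"])
       apply assumption
      apply assumption
      done
  qed
qed

lemma count_rep: "count_list (replicate n x) x = n"
  by (induction n) auto

lemma desing_rep: "desing (replicate m c) = map (GG c) (KK m)"
proof -
  have "desing (replicate m c) = concat (map (\<lambda>k. map (\<lambda>j. (c, j, Suc k)) [1..<Suc k] @ map (\<lambda>j. (c, Suc k, j)) [Suc (Suc k)..<Suc m]) [0..<m])"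
    unfolding desing_def
    by (rule arg_cong[where f = concat], rule map_cong) (auto simp: take_replicate count_rep min_def Let_def)
  also have "\<dots> = concat (map (\<lambda>i. map (\<lambda>j. (c, j, i)) [1..<i] @ map (\<lambda>j. (c, i, j)) [Suc i..<Suc m]) [1..<Suc m])"
  proof -
    have "[1..<Suc m] = map Suc [0..<m]" by (simp only: map_Suc_upt One_nat_def)
    then show ?thesis by (simp only: map_map comp_def)
  qed
  also have "\<dots> = map (GG c) (KK m)"
    unfolding KK_def map_concat map_map
  proof (rule arg_cong[where f = concat], rule map_cong[OF refl])
    fix i assume "i \<in> set [1..<Suc m]"
    show "map (\<lambda>j. (c, j, i)) [1..<i] @ map (\<lambda>j. (c, i, j)) [Suc i..<Suc m] =
      (map (GG c) \<circ> (\<lambda>t. map (Pair t) ([1..<t] @ [Suc t..<Suc m]))) i"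
      unfolding comp_def map_append map_map
      by (intro arg_cong2[where f = append] map_cong[OF refl]) (auto simp: GG_def)
  qed
  finally show ?thesis .
qed


lemma sorted4:
  fixes x1 x2 x3 x4 :: "'k::linorder"
  assumes "sorted_wrt (<) L" "set L = {x1, x2, x3, x4}" "x1 < x2" "x2 < x3" "x3 < x4"
  shows "L = [x1, x2, x3, x4]"
proof (rule strict_sorted_equal[OF _ assms(1)])
  show "sorted_wrt (<) [x1, x2, x3, x4]" using assms(3-5) by (auto intro: less_trans)
  show "set L = set [x1, x2, x3, x4]" using assms(2) by simp
qed

lemma four:
  fixes a1 a2 b1 b2 :: "'k::linorder"
  assumes L: "sorted_wrt (<) L" "set L = {a1, a2, b1, b2}"
    and o: "a1 < a2" "b1 < b2" "a1 \<noteq> b1" "a1 \<noteq> b2" "a2 \<noteq> b1" "a2 \<noteq> b2"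
    and g: "g a1 = A" "g a2 = A" "g b1 = B" "g b2 = B" "A \<noteq> B"
  shows "(map g L = [A, B, A, B]) \<longleftrightarrow> (a1 < b1 \<and> b1 < a2 \<and> a2 < b2)"
    and "(map g L = [B, A, B, A]) \<longleftrightarrow> (b1 < a1 \<and> a1 < b2 \<and> b2 < a2)"
proof -
  have BA: "B \<noteq> A" using g by auto
  consider (c1) "a2 < b1" | (c2) "a1 < b1" "b1 < a2" "a2 < b2" | (c3) "a1 < b1" "b2 < a2"
    | (c4) "b1 < a1" "a2 < b2" | (c5) "b1 < a1" "a1 < b2" "b2 < a2" | (c6) "b2 < a1"
    using o by (metis linorder_neqE less_trans)
  then have "((map g L = [A, B, A, B]) \<longleftrightarrow> (a1 < b1 \<and> b1 < a2 \<and> a2 < b2)) \<and>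
    ((map g L = [B, A, B, A]) \<longleftrightarrow> (b1 < a1 \<and> a1 < b2 \<and> b2 < a2))"
  proof cases
    case c1
    have "L = [a1, a2, b1, b2]" by (rule sorted4[OF L(1)]) (use L(2) o c1 in auto)
    then show ?thesis using g BA c1 o by auto
  next
    case c2
    have "L = [a1, b1, a2, b2]" by (rule sorted4[OF L(1)]) (use L(2) o c2 in auto)
    then show ?thesis using g BA c2 o by auto
  next
    case c3
    have "L = [a1, b1, b2, a2]" by (rule sorted4[OF L(1)]) (use L(2) o c3 in auto)
    then show ?thesis using g BA c3 o by auto
  next
    case c4
    have "L = [b1, a1, a2, b2]" by (rule sorted4[OF L(1)]) (use L(2) o c4 in auto)
    then show ?thesis using g BA c4 o by auto
  next
    case c5
    have "L = [b1, a1, b2, a2]" by (rule sorted4[OF L(1)]) (use L(2) o c5 in auto)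
    then show ?thesis using g BA c5 o by auto
  next
    case c6
    have "L = [b1, b2, a1, a2]" by (rule sorted4[OF L(1)]) (use L(2) o c6 in auto)
    then show ?thesis using g BA c6 o by auto
  qed
  then show "(map g L = [A, B, A, B]) \<longleftrightarrow> (a1 < b1 \<and> b1 < a2 \<and> a2 < b2)"
    and "(map g L = [B, A, B, A]) \<longleftrightarrow> (b1 < a1 \<and> a1 < b2 \<and> b2 < a2)" by simp_all
qed


lemma GG_eq: "p < q \<Longrightarrow> GG c u = (c, p, q) \<longleftrightarrow> (u = (p, q) \<or> u = (q, p))"
  by (cases u) (auto simp: GG_def min_def max_def split: if_splits)

lemma epsW:
  assumes a: "1 \<le> i" "i < j" "j \<le> m" "1 \<le> k" "k < l" "l \<le> m" "(i, j) \<noteq> (k, l)"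
  shows "eps (map (GG c) (KK m)) (c, i, j) (c, k, l) =
    (if i \<le> k \<and> k < j \<and> j \<le> l then 1 else if k \<le> i \<and> i < l \<and> l \<le> j then -1 else 0)"
proof -
  define X where "X = (c, i, j)"
  define Y where "Y = (c, k, l)"
  have XY: "X \<noteq> Y" using a(7) by (simp add: X_def Y_def)
  define L where "L = filter (\<lambda>u. GG c u = X \<or> GG c u = Y) (KK m)"
  have f: "filter (\<lambda>v. v = X \<or> v = Y) (map (GG c) (KK m)) = map (GG c) L"
    by (simp add: L_def filter_map comp_def)
  have sL: "sorted_wrt (<) L" unfolding L_def by (rule sorted_wrt_filter[OF KK_sorted])
  have setL: "set L = {(i, j), (j, i), (k, l), (l, k)}"
    unfolding L_def set_filter set_KK X_def Y_def GG_eq[OF a(2)] GG_eq[OF a(5)] using a by auto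
  have o: "(i, j) < (j, i)" "(k, l) < (l, k)" "(i, j) \<noteq> (k, l)" "(i, j) \<noteq> (l, k)" "(j, i) \<noteq> (k, l)" "(j, i) \<noteq> (l, k)"
    using a by auto
  have g: "GG c (i, j) = X" "GG c (j, i) = X" "GG c (k, l) = Y" "GG c (l, k) = Y"
    using a by (auto simp: GG_def X_def Y_def)
  note F = four[OF sL setL o g XY]
  have c1: "((i, j) < (k, l) \<and> (k, l) < (j, i) \<and> (j, i) < (l, k)) \<longleftrightarrow> (i \<le> k \<and> k < j \<and> j \<le> l)"
    using a by auto
  have c2: "((k, l) < (i, j) \<and> (i, j) < (l, k) \<and> (l, k) < (j, i)) \<longleftrightarrow> (k \<le> i \<and> i < l \<and> l \<le> j)"
    using a by auto
  show ?thesis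
    unfolding X_def[symmetric] Y_def[symmetric] eps_def Let_def f F c1 c2 using XY by simp
qed


definition PP :: "nat \<Rightarrow> (nat \<times> nat) set" where
  "PP m = {(k, l). 1 \<le> k \<and> k < l \<and> l \<le> m}"

lemma finite_PP: "finite (PP m)"
  by (rule finite_subset[of _ "{1..m} \<times> {1..m}"]) (auto simp: PP_def)

lemma set_W: "set (map (GG c) (KK m)) = (Pair c) ` PP m"
proof
  show "set (map (GG c) (KK m)) \<subseteq> (Pair c) ` PP m"
  proof
    fix X assume "X \<in> set (map (GG c) (KK m))"
    then obtain t s where ts: "(t, s) \<in> set (KK m)" "X = GG c (t, s)" by auto
    then have h: "1 \<le> t" "t \<le> m" "1 \<le> s" "s \<le> m" "t \<noteq> s" by (auto simp: set_KK)
    have "(min t s, max t s) \<in> PP m" using h by (auto simp: PP_def min_def max_def)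
    moreover have "X = (Pair c) (min t s, max t s)" using ts by (simp add: GG_def)
    ultimately show "X \<in> (Pair c) ` PP m" by blast
  qed
next
  show "(Pair c) ` PP m \<subseteq> set (map (GG c) (KK m))"
  proof
    fix X assume "X \<in> (Pair c) ` PP m"
    then obtain k l where kl: "(k, l) \<in> PP m" "X = (c, k, l)" by auto
    then have "(k, l) \<in> set (KK m)" by (auto simp: PP_def set_KK)
    moreover have "X = GG c (k, l)" using kl by (auto simp: GG_def PP_def)
    ultimately show "X \<in> set (map (GG c) (KK m))" by auto
  qed
qed

lemma inj_W: "inj_on (Pair c) A"
  by (auto simp: inj_on_def prod_eq_iff)

lemma sum_ind: "finite A \<Longrightarrow> B \<subseteq> A \<Longrightarrow> (\<Sum>u\<in>A. (if u \<in> B then 1 else 0 :: int)) = int (card B)"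
proof -
  assume "finite A" "B \<subseteq> A"
  then have "(\<Sum>u\<in>A. (if u \<in> B then 1 else 0 :: int)) = (\<Sum>u\<in>A \<inter> B. 1)"
    by (simp add: sum.If_cases)
  moreover have "A \<inter> B = B" using \<open>B \<subseteq> A\<close> by auto
  ultimately show ?thesis by simp
qed

lemma cvalW:
  assumes a: "1 \<le> i" "i < j" "j \<le> m"
  shows "cval \<tau> c (map (GG c) (KK m)) (fst) (c, i, j) = int ((j - i) * (Suc m - j)) - int (i * (j - i))"
proof -
  define P1 where "P1 = ({i..<j} \<times> {j..m}) - {(i, j)}"
  define P2 where "P2 = ({1..i} \<times> {Suc i..j}) - {(i, j)}"
  define e where "e = (\<lambda>u. (if u \<in> P1 then 1 else 0) - (if u \<in> P2 then 1 else 0 :: int))"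
  have chi1: "chi \<tau> c c = 1" by (simp add: chi_def)
  have "cval \<tau> c (map (GG c) (KK m)) (fst) (c, i, j) =
      (\<Sum>u\<in>PP m. eps (map (GG c) (KK m)) (c, i, j) (c, u))"
    unfolding cval_def set_W by (simp add: sum.reindex[OF inj_W] chi1)
  also have "\<dots> = (\<Sum>u\<in>PP m. e u)"
  proof (rule sum.cong[OF refl])
    fix u assume u: "u \<in> PP m"
    obtain k l where kl: "u = (k, l)" by (cases u)
    have h: "1 \<le> k" "k < l" "l \<le> m" using u kl by (auto simp: PP_def)
    show "eps (map (GG c) (KK m)) (c, i, j) (c, u) = e u"
    proof (cases "(i, j) = (k, l)")
      case True then show ?thesis by (simp add: kl eps_def e_def P1_def P2_def)
    next
      case False
      show ?thesis unfolding kl epsW[OF a h False] using False h a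
        by (auto simp: e_def P1_def P2_def)
    qed
  qed
  also have "\<dots> = int (card P1) - int (card P2)"
  proof -
    have s1: "P1 \<subseteq> PP m" "P2 \<subseteq> PP m" using a by (auto simp: P1_def P2_def PP_def)
    show ?thesis unfolding e_def sum_subtractf using sum_ind[OF finite_PP s1(1)] sum_ind[OF finite_PP s1(2)]
      by simp
  qed
  also have "int (card P1) = int ((j - i) * (Suc m - j)) - 1"
  proof -
    have "(i, j) \<in> {i..<j} \<times> {j..m}" using a by auto
    then have "card P1 = (j - i) * (Suc m - j) - 1" unfolding P1_def
      by (simp add: card_Diff_singleton card_cartesian_product)
    moreover have "(j - i) * (Suc m - j) \<ge> 1" using a by (simp; arith)
    ultimately show ?thesis by simp
  qed
  also have "int (card P2) = int (i * (j - i)) - 1"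
  proof -
    have "(i, j) \<in> {1..i} \<times> {Suc i..j}" using a by auto
    then have "card P2 = i * (j - i) - 1" unfolding P2_def
      by (simp add: card_Diff_singleton card_cartesian_product)
    moreover have "i * (j - i) \<ge> 1" using a by (simp; arith)
    ultimately show ?thesis by simp
  qed
  finally show ?thesis by simp
qed

lemma cvalW_zero:
  assumes a: "1 \<le> i" "i < j" "j \<le> m"
  shows "cval \<tau> c (map (GG c) (KK m)) (fst) (c, i, j) = 0 \<longleftrightarrow> i + j = Suc m"
proof -
  have "(j - i) * (Suc m - j) = i * (j - i) \<longleftrightarrow> Suc m - j = i"
    using a by (simp add: mult.commute[of i])
  also have "\<dots> \<longleftrightarrow> i + j = Suc m" using a by auto
  finally show ?thesis unfolding cvalW[OF a] by simp
qed


definition FF :: "nat \<Rightarrow> nat" where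
  "FF m = card {u \<in> PP m. fst u + snd u \<noteq> Suc m}"

lemma JJ_W: "JJ \<tau> c (map (GG c) (KK m), fst) = int (FF m)"
proof -
  have chi1: "chi \<tau> c c = 1" by (simp add: chi_def)
  have "JJ \<tau> c (map (GG c) (KK m), fst) =
     (\<Sum>u\<in>PP m. if cval \<tau> c (map (GG c) (KK m)) (fst) (c, u) = 0 then 0 else 1)"
    unfolding JJ_def fst_conv snd_conv set_W sum.reindex[OF inj_W] comp_def
    apply (rule sum.cong[OF refl])
    apply (simp only: fst_conv chi1)
    done
  also have "\<dots> = (\<Sum>u\<in>PP m. if u \<in> {u \<in> PP m. fst u + snd u \<noteq> Suc m} then 1 else 0)"
  proof (rule sum.cong[OF refl])
    fix u assume u: "u \<in> PP m"
    obtain i j where ij: "u = (i, j)" by (cases u)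
    have h: "1 \<le> i" "i < j" "j \<le> m" using u ij by (auto simp: PP_def)
    show "(if cval \<tau> c (map (GG c) (KK m)) (fst) (c, u) = 0 then 0 else 1) =
      (if u \<in> {u \<in> PP m. fst u + snd u \<noteq> Suc m} then 1 else (0::int))"
      unfolding ij cvalW_zero[OF h] using u ij by simp
  qed
  also have "\<dots> = int (FF m)" unfolding FF_def by (rule sum_ind[OF finite_PP]) auto
  finally show ?thesis .
qed

lemma JJ_other:
  assumes "b \<noteq> a"
  shows "JJ \<tau> a (map (GG b) (KK n), fst) \<le> 0"
proof -
  have "chi \<tau> a b \<le> 0" using assms by (simp add: chi_def)
  then show ?thesis unfolding JJ_def fst_conv snd_conv set_W
    by (intro sum_nonpos) auto
qed

lemma FF_less:
  assumes "2 \<le> m" shows "FF m < FF (Suc m)"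
proof -
  let ?S = "\<lambda>m. {u \<in> PP m. fst u + snd u \<noteq> Suc m}"
  let ?h = "\<lambda>u. (fst u, Suc (snd u))"
  have fin: "finite (?S (Suc m))" using finite_PP by auto
  have inj: "inj_on ?h (?S m)" by (auto simp: inj_on_def prod_eq_iff)
  have sub: "?h ` ?S m \<subseteq> ?S (Suc m) - {(1, 2)}" by (auto simp: PP_def)
  have mem: "(1, 2) \<in> ?S (Suc m)" using assms by (auto simp: PP_def)
  have "FF m = card (?h ` ?S m)" unfolding FF_def by (simp add: card_image[OF inj])
  also have "\<dots> \<le> card (?S (Suc m) - {(1, 2)})" by (rule card_mono) (use fin sub in auto)
  also have "\<dots> < card (?S (Suc m))" by (rule card_Diff1_less[OF fin mem])
  finally show ?thesis unfolding FF_def .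
qed

lemma FF_mono: "2 \<le> m \<Longrightarrow> m < n \<Longrightarrow> FF m < FF n"
proof (induction n)
  case 0 then show ?case by simp
next
  case (Suc n)
  show ?case
  proof (cases "m = n")
    case True then show ?thesis using FF_less Suc by simp
  next
    case False
    then have "FF m < FF n" using Suc by simp
    also have "FF n < FF (Suc n)" using FF_less Suc False by simp
    finally show ?thesis .
  qed
qed

lemma FF_pos: "3 \<le> m \<Longrightarrow> 0 < FF m"
proof -
  assume "3 \<le> m"
  then have "(1, 2) \<in> {u \<in> PP m. fst u + snd u \<noteq> Suc m}" by (auto simp: PP_def)
  moreover have "finite {u \<in> PP m. fst u + snd u \<noteq> Suc m}" using finite_PP by auto
  ultimately show ?thesis unfolding FF_def by (metis card_gt_0_iff empty_iff)
qed

theorem theorem6p3: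
  fixes \<tau> :: "'a \<Rightarrow> 'a" and a b :: 'a and m n :: nat
  assumes "\<forall>x. \<tau> (\<tau> x) = x"
    and "a \<noteq> \<tau> a" and "b \<noteq> \<tau> b"
    and "m \<ge> 3" and "n \<ge> 3"
  shows "etale_homotopic \<tau> (replicate m a, id) (replicate n b, id) \<longleftrightarrow> a = b \<and> m = n"
proof
  assume "etale_homotopic \<tau> (replicate m a, id) (replicate n b, id)"
  then have "nano_homotopic \<tau> (map (GG a) (KK m), fst) (map (GG b) (KK n), fst)"
    by (simp add: etale_homotopic_def desing_rep)
  then have eq: "JJ \<tau> a (map (GG a) (KK m), fst) = JJ \<tau> a (map (GG b) (KK n), fst)"
    using homotopic_inv[OF assms(1,2)] by blast
  have ab: "a = b"
  proof (rule ccontr)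
    assume "a \<noteq> b"
    then have "JJ \<tau> a (map (GG b) (KK n), fst) \<le> 0" using JJ_other[of b a] by auto
    moreover have "JJ \<tau> a (map (GG a) (KK m), fst) > 0" using JJ_W[of \<tau> a m] FF_pos[OF assms(4)] by linarith
    ultimately show False using eq by simp
  qed
  then have "FF m = FF n" using eq JJ_W[of \<tau> a m] JJ_W[of \<tau> a n] by simp
  then have "m = n" using FF_mono[of m n] FF_mono[of n m] assms(4,5)
    by (metis less_irrefl linorder_neqE_nat numeral_le_iff le_trans nat_le_linear one_le_numeral
        semiring_norm(69) numeral_One Suc_1 eval_nat_numeral(3) not_less_eq_eq)
  with ab show "a = b \<and> m = n" by simp
next
  assume "a = b \<and> m = n"
  then show "etale_homotopic \<tau> (replicate m a, id) (replicate n b, id)"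
    by (simp add: etale_homotopic_def nano_homotopic_def)
qed

end
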